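(* Let $A$ be a finite-dimensional semisimple associative algebra over $\mathbb{C}$, $G$ a finite group of automorphisms of $A$, and $M$ a finite-dimensional simple $A$-module with inertia subgroup $G_M$, isomorphisms $\phi(h)$ and 2-cocycle $\alpha_M$ as in the context. Then for every $\gamma\in J_{M,\alpha_M}$, the multiplicity space $M_\gamma$ is a simple $A^G$-module.
   Context: For an $A$-module $M$ and $h\in G$, ${}^hM$ denotes $M$ with $A$-action $a*_hm=h^{-1}(a)m$. The inertia subgroup is $G_M=\{h\in G: {}^hM\cong M \text{ as } A\text{-modules}\}$. For each $h\in G_M$ fix a linear bijection $\phi(h)$ of $M$ with $\phi(h)a=h(a)\phi(h)$ for all $a\in A$, $\phi(1)=1_M$; then $\phi(h)\phi(k)=\alpha_M(h,k)\phi(hk)$ for a 2-cocycle $\alpha_M$ (values roots of unity). $\mathbb{C}^{\alpha_M}[G_M]$ is the twisted group algebra with basis $\bar h$ and $\bar h\bar k=\alpha_M(h,k)\overline{hk}$; $M$ is a $\mathbb{C}^{\alpha_M}[G_M]$-module via $\bar h\mapsto\phi(h)$. $J_{M,\alpha_M}$ is the set of irreducible characters $\lambda$ of $\mathbb{C}^{\alpha_M}[G_M]$ whose simple module $W_\lambda$ occurs in $M$. Fixing a nonzero $w\in W_\lambda$, $M_\lambda=\{f(w): f\in\mathrm{Hom}_{\mathbb{C}^{\alpha_M}[G_M]}(W_\lambda,M)\}\subseteq M$, which is stable under $A^G=\{a\in A: g(a)=a\ \forall g\in G\}$. *)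

theory Defs
  imports Complex_Main
begin

text \<open>A complex vector space is an abelian-group type together with a
scalar multiplication s :: complex => 'v => 'v satisfying the library locale
vector_space s. The whole type plays the role of the space.\<close>

definition fin_dim :: "(complex \<Rightarrow> 'v::ab_group_add \<Rightarrow> 'v) \<Rightarrow> bool" where
  "fin_dim s \<longleftrightarrow> vector_space s \<and> (\<exists>B. finite B \<and> module.span s B = UNIV)"

definition complex_algebra :: "(complex \<Rightarrow> 'a::ring_1 \<Rightarrow> 'a) \<Rightarrow> bool" where
  "complex_algebra sA \<longleftrightarrow> vector_space sA \<and>
     (\<forall>c x y. sA c (x * y) = sA c x * y \<and> sA c (x * y) = x * sA c y)"

definition left_ideal :: "(complex \<Rightarrow> 'a::ring_1 \<Rightarrow> 'a) \<Rightarrow> 'a set \<Rightarrow> bool" where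
  "left_ideal sA L \<longleftrightarrow> module.subspace sA L \<and> (\<forall>a x. x \<in> L \<longrightarrow> a * x \<in> L)"

definition semisimple_algebra :: "(complex \<Rightarrow> 'a::ring_1 \<Rightarrow> 'a) \<Rightarrow> bool" where
  "semisimple_algebra sA \<longleftrightarrow> complex_algebra sA \<and> fin_dim sA \<and>
     (\<forall>L. left_ideal sA L \<longrightarrow>
        (\<exists>L'. left_ideal sA L' \<and> L \<inter> L' = {0} \<and> {x + y | x y. x \<in> L \<and> y \<in> L'} = UNIV))"

definition algebra_aut :: "(complex \<Rightarrow> 'a::ring_1 \<Rightarrow> 'a) \<Rightarrow> ('a \<Rightarrow> 'a) \<Rightarrow> bool" where
  "algebra_aut sA g \<longleftrightarrow> bij g \<and> g 1 = 1 \<and>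
     (\<forall>x y. g (x + y) = g x + g y \<and> g (x * y) = g x * g y) \<and>
     (\<forall>c x. g (sA c x) = sA c (g x))"

definition aut_group :: "(complex \<Rightarrow> 'a::ring_1 \<Rightarrow> 'a) \<Rightarrow> ('a \<Rightarrow> 'a) set \<Rightarrow> bool" where
  "aut_group sA G \<longleftrightarrow> finite G \<and> id \<in> G \<and> (\<forall>g\<in>G. algebra_aut sA g) \<and>
     (\<forall>g\<in>G. \<forall>h\<in>G. g \<circ> h \<in> G) \<and> (\<forall>g\<in>G. inv g \<in> G)"

definition A_module :: "(complex \<Rightarrow> 'a::ring_1 \<Rightarrow> 'a) \<Rightarrow> (complex \<Rightarrow> 'm::ab_group_add \<Rightarrow> 'm)
    \<Rightarrow> ('a \<Rightarrow> 'm \<Rightarrow> 'm) \<Rightarrow> bool" where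
  "A_module sA sM act \<longleftrightarrow> vector_space sM \<and>
     (\<forall>a. Vector_Spaces.linear sM sM (act a)) \<and> act 1 = id \<and>
     (\<forall>a b. act (a * b) = act a \<circ> act b) \<and>
     (\<forall>a b m. act (a + b) m = act a m + act b m) \<and>
     (\<forall>c a m. act (sA c a) m = sM c (act a m))"

definition simple_over :: "(complex \<Rightarrow> 'm::ab_group_add \<Rightarrow> 'm) \<Rightarrow> ('a \<Rightarrow> 'm \<Rightarrow> 'm)
    \<Rightarrow> 'a set \<Rightarrow> 'm set \<Rightarrow> bool" where
  "simple_over sM act R S \<longleftrightarrow> module.subspace sM S \<and> (\<forall>a\<in>R. \<forall>m\<in>S. act a m \<in> S) \<and>
     S \<noteq> {0} \<and>
     (\<forall>N. N \<subseteq> S \<longrightarrow> module.subspace sM N \<longrightarrow> (\<forall>a\<in>R. \<forall>m\<in>N. act a m \<in> N) \<longrightarrow>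
          N = {0} \<or> N = S)"

definition fixed_alg :: "('a \<Rightarrow> 'a) set \<Rightarrow> 'a set" where
  "fixed_alg G = {a. \<forall>g\<in>G. g a = a}"

text \<open>Inertia subgroup: h in G such that the twisted module hM (action a *_h m =
inv h a m) is isomorphic to M as A-module.\<close>
definition inertia :: "(complex \<Rightarrow> 'm::ab_group_add \<Rightarrow> 'm) \<Rightarrow> ('a \<Rightarrow> 'm \<Rightarrow> 'm)
    \<Rightarrow> ('a \<Rightarrow> 'a) set \<Rightarrow> ('a \<Rightarrow> 'a) set" where
  "inertia sM act G = {h \<in> G. \<exists>f. Vector_Spaces.linear sM sM f \<and> bij f \<and>
       (\<forall>a m. f (act (inv h a) m) = act a (f m))}"

text \<open>A module over the twisted group algebra C^alpha[H]: the basis element h-bar acts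
by the linear map rho h; the algebra relations h-bar k-bar = alpha(h,k) (hk)-bar
and 1-bar = identity element.\<close>
definition twisted_module :: "(complex \<Rightarrow> 'w::ab_group_add \<Rightarrow> 'w) \<Rightarrow> (('a \<Rightarrow> 'a) \<Rightarrow> 'w \<Rightarrow> 'w)
    \<Rightarrow> ('a \<Rightarrow> 'a) set \<Rightarrow> (('a \<Rightarrow> 'a) \<Rightarrow> ('a \<Rightarrow> 'a) \<Rightarrow> complex) \<Rightarrow> bool" where
  "twisted_module sW \<rho> H \<alpha> \<longleftrightarrow> vector_space sW \<and>
     (\<forall>h\<in>H. Vector_Spaces.linear sW sW (\<rho> h)) \<and> \<rho> id = id \<and>
     (\<forall>h\<in>H. \<forall>k\<in>H. \<forall>w. \<rho> h (\<rho> k w) = sW (\<alpha> h k) (\<rho> (h \<circ> k) w))"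

definition simple_twisted_module :: "(complex \<Rightarrow> 'w::ab_group_add \<Rightarrow> 'w) \<Rightarrow> (('a \<Rightarrow> 'a) \<Rightarrow> 'w \<Rightarrow> 'w)
    \<Rightarrow> ('a \<Rightarrow> 'a) set \<Rightarrow> (('a \<Rightarrow> 'a) \<Rightarrow> ('a \<Rightarrow> 'a) \<Rightarrow> complex) \<Rightarrow> bool" where
  "simple_twisted_module sW \<rho> H \<alpha> \<longleftrightarrow> twisted_module sW \<rho> H \<alpha> \<and> fin_dim sW \<and>
     (UNIV :: 'w set) \<noteq> {0} \<and>
     (\<forall>N. module.subspace sW N \<longrightarrow> (\<forall>h\<in>H. \<forall>w\<in>N. \<rho> h w \<in> N) \<longrightarrow> N = {0} \<or> N = UNIV)"

definition twisted_hom :: "(complex \<Rightarrow> 'w::ab_group_add \<Rightarrow> 'w) \<Rightarrow> (complex \<Rightarrow> 'm::ab_group_add \<Rightarrow> 'm)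
    \<Rightarrow> (('a \<Rightarrow> 'a) \<Rightarrow> 'w \<Rightarrow> 'w) \<Rightarrow> (('a \<Rightarrow> 'a) \<Rightarrow> 'm \<Rightarrow> 'm) \<Rightarrow> ('a \<Rightarrow> 'a) set
    \<Rightarrow> ('w \<Rightarrow> 'm) \<Rightarrow> bool" where
  "twisted_hom sW sM \<rho> \<phi> H f \<longleftrightarrow> Vector_Spaces.linear sW sM f \<and>
     (\<forall>h\<in>H. \<forall>w. f (\<rho> h w) = \<phi> h (f w))"

definition mult_space :: "(complex \<Rightarrow> 'w::ab_group_add \<Rightarrow> 'w) \<Rightarrow> (complex \<Rightarrow> 'm::ab_group_add \<Rightarrow> 'm)
    \<Rightarrow> (('a \<Rightarrow> 'a) \<Rightarrow> 'w \<Rightarrow> 'w) \<Rightarrow> (('a \<Rightarrow> 'a) \<Rightarrow> 'm \<Rightarrow> 'm) \<Rightarrow> ('a \<Rightarrow> 'a) set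
    \<Rightarrow> 'w \<Rightarrow> 'm set" where
  "mult_space sW sM \<rho> \<phi> H w = {f w | f. twisted_hom sW sM \<rho> \<phi> H f}"

end

theory Submission
  imports Defs "HOL-Computational_Algebra.Fundamental_Theorem_Algebra"
begin

definition peval :: "(complex \<Rightarrow> 'v::ab_group_add \<Rightarrow> 'v) \<Rightarrow> ('v \<Rightarrow> 'v) \<Rightarrow> complex poly \<Rightarrow> 'v \<Rightarrow> 'v" where
  "peval s T p x = (\<Sum>k\<le>degree p. s (coeff p k) ((T^^k) x))"

lemma peval_upto:
  assumes vs: "vector_space s" and d: "degree p \<le> N"
  shows "peval s T p x = (\<Sum>k\<le>N. s (coeff p k) ((T^^k) x))"
proof -
  interpret vector_space s by fact
  show ?thesis unfolding peval_def
    by (rule sum.mono_neutral_left) (use d in \<open>auto simp: coeff_eq_0\<close>)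
qed

lemma peval_linfactor:
  assumes vs: "vector_space s" and lin: "Vector_Spaces.linear s s T"
  shows "peval s T ([:-r,1:] * q) x = T (peval s T q x) - s r (peval s T q x)"
proof -
  interpret vector_space s by fact
  interpret L: Vector_Spaces.linear s s T by fact
  let ?N = "Suc (degree q)"
  have pq: "[:-r,1:] * q = smult (-r) q + pCons 0 q" by simp
  have dg: "degree ([:-r,1:] * q) \<le> ?N"
    using degree_mult_le[of "[:-r,1:]" q] by simp
  have "peval s T ([:-r,1:] * q) x = (\<Sum>k\<le>?N. s (coeff ([:-r,1:] * q) k) ((T^^k) x))"
    by (rule peval_upto[OF vs dg])
  also have "\<dots> = (\<Sum>k\<le>?N. s (coeff (pCons 0 q) k) ((T^^k) x)) - (\<Sum>k\<le>?N. s r (s (coeff q k) ((T^^k) x)))"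
    unfolding pq by (simp add: scale_left_distrib sum.distrib scale_scale algebra_simps sum_subtractf)
  also have "(\<Sum>k\<le>?N. s r (s (coeff q k) ((T^^k) x))) = s r (peval s T q x)"
  proof -
    have eq: "peval s T q x = (\<Sum>k\<le>?N. s (coeff q k) ((T^^k) x))" by (rule peval_upto[OF vs]) simp
    show ?thesis by (simp only: eq scale_sum_right)
  qed
  also have "(\<Sum>k\<le>?N. s (coeff (pCons 0 q) k) ((T^^k) x)) = (\<Sum>k\<le>degree q. s (coeff q k) ((T^^(Suc k)) x))"
    by (subst sum.atMost_Suc_shift) simp
  also have "\<dots> = T (peval s T q x)"
    by (simp add: peval_def L.sum L.scale)
  finally show ?thesis .
qed

lemma eigen_from_poly:
  assumes vs: "vector_space s" and lin: "Vector_Spaces.linear s s T"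
  shows "p \<noteq> 0 \<Longrightarrow> x \<noteq> 0 \<Longrightarrow> peval s T p x = 0 \<Longrightarrow> \<exists>l u. u \<noteq> 0 \<and> T u = s l u"
proof (induction "degree p" arbitrary: p x rule: less_induct)
  case less
  interpret vector_space s by fact
  show ?case
  proof (cases "degree p = 0")
    case True
    then have "peval s T p x = s (coeff p 0) x" by (simp add: peval_def)
    moreover have "coeff p 0 \<noteq> 0" using True less.prems(1) leading_coeff_0_iff by fastforce
    ultimately show ?thesis using less.prems by simp
  next
    case False
    have "\<exists>z. poly p z = 0"
      by (rule fundamental_theorem_of_algebra_alt) (use False in auto)
    then obtain r where "poly p r = 0" by blast
    then obtain q where pq: "p = [:-r,1:] * q" using poly_eq_0_iff_dvd by (metis dvdE)
    have q0: "q \<noteq> 0" using pq less.prems(1) by auto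
    have "degree p = degree [:-r,1::complex:] + degree q"
      unfolding pq by (rule degree_mult_eq) (use q0 in auto)
    then have dq: "degree q < degree p" by simp
    have ev: "T (peval s T q x) - s r (peval s T q x) = 0"
      using peval_linfactor[OF vs lin, of r q x] pq less.prems(3) by simp
    show ?thesis
    proof (cases "peval s T q x = 0")
      case True
      then show ?thesis using less.hyps[OF dq q0 less.prems(2)] by blast
    next
      case False
      then show ?thesis using ev by (intro exI[of _ r] exI[of _ "peval s T q x"]) simp
    qed
  qed
qed

lemma exists_eigen:
  fixes s :: "complex \<Rightarrow> 'v::ab_group_add \<Rightarrow> 'v" and v :: 'v
  assumes vs: "vector_space s" and lin: "Vector_Spaces.linear s s T" and fd: "fin_dim s"
    and nz: "v \<noteq> 0"
  shows "\<exists>l u. u \<noteq> 0 \<and> T u = s l u"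
proof -
  interpret vector_space s by fact
  obtain B where B: "finite B" "span B = UNIV" using fd unfolding fin_dim_def by blast
  let ?n = "card B"
  let ?f = "\<lambda>k. (T^^k) v"
  have "\<exists>c. (\<exists>k\<le>?n. c k \<noteq> 0) \<and> (\<Sum>k\<le>?n. s (c k) (?f k)) = 0"
  proof (cases "inj_on ?f {..?n}")
    case True
    let ?V = "?f ` {..?n}"
    have cV: "card ?V = Suc ?n" using True by (simp add: card_image)
    have "dependent ?V"
    proof (rule ccontr)
      assume "\<not> dependent ?V"
      from independent_span_bound[OF B(1) this] B(2) have "card ?V \<le> ?n" by auto
      with cV show False by simp
    qed
    then obtain u where u: "\<exists>y\<in>?V. u y \<noteq> 0" "(\<Sum>y\<in>?V. s (u y) y) = 0"
      using dependent_finite[of ?V] by auto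
    have "(\<Sum>k\<le>?n. s (u (?f k)) (?f k)) = (\<Sum>y\<in>?V. s (u y) y)"
      using sum.reindex[OF True, of "\<lambda>y. s (u y) y"] by simp
    with u show ?thesis by (intro exI[of _ "\<lambda>k. u (?f k)"]) auto
  next
    case False
    then obtain i j where ij: "i \<le> ?n" "j \<le> ?n" "i \<noteq> j" "?f i = ?f j"
      unfolding inj_on_def by auto
    let ?c = "\<lambda>k. (if k = i then 1 else 0) - (if k = j then 1 else (0::complex))"
    have "(\<Sum>k\<le>?n. s (?c k) (?f k)) = (\<Sum>k\<le>?n. (if k = i then ?f k else 0)) - (\<Sum>k\<le>?n. (if k = j then ?f k else 0))"
    proof -
      have "s (?c k) (?f k) = (if k = i then ?f k else 0) - (if k = j then ?f k else 0)" for k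
        using ij(3) by (auto simp: scale_left_diff_distrib)
      then show ?thesis by (simp add: sum_subtractf)
    qed
    also have "\<dots> = 0" using ij by simp
    finally show ?thesis using ij by (intro exI[of _ ?c]) auto
  qed
  then obtain c where c: "\<exists>k\<le>?n. c k \<noteq> 0" "(\<Sum>k\<le>?n. s (c k) (?f k)) = 0" by blast
  define p where "p = (\<Sum>k\<le>?n. monom (c k) k)"
  have cp: "coeff p k = (if k \<le> ?n then c k else 0)" for k
    unfolding p_def coeff_sum by (simp add: coeff_monom)
  have dp: "degree p \<le> ?n" by (rule degree_le) (simp add: cp)
  have p0: "p \<noteq> 0" using c(1) cp by (metis coeff_0)
  have "peval s T p v = (\<Sum>k\<le>?n. s (coeff p k) (?f k))" by (rule peval_upto[OF vs dp])
  also have "\<dots> = 0" using c(2) by (simp add: cp)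
  finally show ?thesis using eigen_from_poly[OF vs lin p0 nz] by blast
qed


locale smod =
  fixes sA :: "complex \<Rightarrow> 'a::ring_1 \<Rightarrow> 'a" and sM :: "complex \<Rightarrow> 'm::ab_group_add \<Rightarrow> 'm"
    and act :: "'a \<Rightarrow> 'm \<Rightarrow> 'm"
  assumes Amod: "A_module sA sM act" and fdM: "fin_dim sM" and simpM: "simple_over sM act UNIV UNIV"
begin

lemma vsM: "vector_space sM" using Amod unfolding A_module_def by blast

sublocale M: vector_space sM by (rule vsM)

lemma act_lin: "Vector_Spaces.linear sM sM (act a)" using Amod unfolding A_module_def by blast

lemma act_add_right: "act a (x + y) = act a x + act a y"
  using act_lin[of a] unfolding Vector_Spaces.linear_iff by blast
lemma act_scale_right: "act a (sM c x) = sM c (act a x)"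
  using act_lin[of a] unfolding Vector_Spaces.linear_iff by blast
lemma act_zero_right[simp]: "act a 0 = 0"
  by (metis act_add_right add_cancel_right_right)
lemma act_diff_right: "act a (x - y) = act a x - act a y"
  by (metis act_add_right add_diff_cancel diff_add_cancel)
lemma act_add_left: "act (a + b) m = act a m + act b m"
  using Amod unfolding A_module_def by blast
lemma act_zero_left[simp]: "act 0 m = 0"
  by (metis act_add_left add_cancel_right_right add_0)
lemma act_diff_left: "act (a - b) m = act a m - act b m"
  by (metis act_add_left add_diff_cancel diff_add_cancel)
lemma act_mult: "act (a * b) m = act a (act b m)"
  using Amod unfolding A_module_def by (simp add: comp_def)
lemma act_one[simp]: "act 1 m = m"
  using Amod unfolding A_module_def by simp
lemma act_scale_left: "act (sA c a) m = sM c (act a m)"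
  using Amod unfolding A_module_def by blast
lemma act_sum_left: "act (sum f S) m = (\<Sum>s\<in>S. act (f s) m)"
proof -
  have "sum ((\<lambda>a. act a m) \<circ> f) S = act (sum f S) m"
    by (rule sum_comp_morphism) (auto simp: act_add_left)
  then show ?thesis by (simp add: comp_def)
qed

lemma simple: "M.subspace N \<Longrightarrow> (\<forall>a. \<forall>m\<in>N. act a m \<in> N) \<Longrightarrow> N = {0} \<or> N = UNIV"
  using simpM unfolding simple_over_def by blast

lemma nontriv: "\<exists>v::'m. v \<noteq> 0"
  using simpM unfolding simple_over_def by auto

lemma schur:
  assumes lin: "Vector_Spaces.linear sM sM T" and eq: "\<forall>a m. T (act a m) = act a (T m)"
  shows "\<exists>l. \<forall>m. T m = sM l m"
proof -
  obtain v :: 'm where "v \<noteq> 0" using nontriv by blast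
  then obtain l u where lu: "u \<noteq> 0" "T u = sM l u"
    using exists_eigen[OF vsM lin fdM] by blast
  interpret L: Vector_Spaces.linear sM sM T by fact
  let ?K = "{m. T m = sM l m}"
  have sub: "M.subspace ?K"
    unfolding M.subspace_def
    by (auto simp: L.add L.scale M.scale_right_distrib M.scale_left_commute)
  have st: "\<forall>a. \<forall>m\<in>?K. act a m \<in> ?K" by (auto simp: eq act_scale_right)
  have "?K \<noteq> {0}" using lu by auto
  with simple[OF sub st] have "?K = UNIV" by blast
  then show ?thesis by auto
qed

lemma density:
  "finite S \<Longrightarrow> M.independent S \<Longrightarrow> x \<notin> M.span S \<Longrightarrow> \<exists>a. (\<forall>s\<in>S. act a s = 0) \<and> act a x \<noteq> 0"
proof (induction S arbitrary: x rule: finite_induct)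
  case empty
  then show ?case by (intro exI[of _ 1]) auto
next
  case (insert u S)
  have indS: "M.independent S" and uS: "u \<notin> M.span S"
    using insert.prems(1) insert.hyps(2) M.independent_insert by auto
  show ?case
  proof (rule ccontr)
    assume H: "\<not> ?case"
    let ?I = "{a. \<forall>s\<in>S. act a s = 0}"
    let ?N = "(\<lambda>a. act a u) ` ?I"
    have sub: "M.subspace ?N"
      unfolding M.subspace_def
    proof (intro conjI ballI allI)
      show "0 \<in> ?N" by (rule image_eqI[of _ _ 0]) auto
    next
      fix p q assume "p \<in> ?N" "q \<in> ?N"
      then obtain a b where "a \<in> ?I" "b \<in> ?I" "p = act a u" "q = act b u" by auto
      then show "p + q \<in> ?N" by (intro image_eqI[of _ _ "a + b"]) (auto simp: act_add_left)
    next
      fix c p assume "p \<in> ?N"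
      then obtain a where "a \<in> ?I" "p = act a u" by auto
      then show "sM c p \<in> ?N" by (intro image_eqI[of _ _ "sA c a"]) (auto simp: act_scale_left)
    qed
    have st: "\<forall>c. \<forall>m\<in>?N. act c m \<in> ?N"
    proof (intro allI ballI)
      fix c m assume "m \<in> ?N"
      then obtain a where "a \<in> ?I" "m = act a u" by auto
      then show "act c m \<in> ?N" by (intro image_eqI[of _ _ "c * a"]) (auto simp: act_mult)
    qed
    obtain a0 where "\<forall>s\<in>S. act a0 s = 0" "act a0 u \<noteq> 0" using insert.IH[OF indS uS] by blast
    then have "?N \<noteq> {0}" by auto
    with simple[OF sub st] have NU: "?N = UNIV" by blast
    have wd: "act a x = act b x" if "a \<in> ?I" "b \<in> ?I" "act a u = act b u" for a b
    proof -
      have "\<forall>s\<in>insert u S. act (a - b) s = 0" using that by (auto simp: act_diff_left)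
      then have "act (a - b) x = 0" using H by blast
      then show ?thesis by (simp add: act_diff_left)
    qed
    define T where "T m = act (SOME a. a \<in> ?I \<and> act a u = m) x" for m
    have ex: "\<exists>a. a \<in> ?I \<and> act a u = m" for m using NU by (metis (no_types, lifting) UNIV_I imageE)
    have Tk: "T (act a u) = act a x" if "a \<in> ?I" for a
    proof -
      have "(SOME b. b \<in> ?I \<and> act b u = act a u) \<in> ?I \<and> act (SOME b. b \<in> ?I \<and> act b u = act a u) u = act a u"
        by (rule someI_ex) (use that in blast)
      then show ?thesis unfolding T_def using wd that by blast
    qed
    have lin: "Vector_Spaces.linear sM sM T"
      unfolding Vector_Spaces.linear_iff
    proof (intro conjI allI vsM)
      fix m1 m2
      obtain a1 a2 where "a1 \<in> ?I" "act a1 u = m1" "a2 \<in> ?I" "act a2 u = m2" using ex by meson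
      then show "T (m1 + m2) = T m1 + T m2"
        using Tk[of "a1 + a2"] Tk[of a1] Tk[of a2] by (auto simp: act_add_left)
    next
      fix c m
      obtain a where "a \<in> ?I" "act a u = m" using ex by meson
      then show "T (sM c m) = sM c (T m)"
        using Tk[of "sA c a"] Tk[of a] by (auto simp: act_scale_left)
    qed
    have eqv: "\<forall>c m. T (act c m) = act c (T m)"
    proof (intro allI)
      fix c m
      obtain a where "a \<in> ?I" "act a u = m" using ex by meson
      then show "T (act c m) = act c (T m)"
        using Tk[of "c * a"] Tk[of a] by (auto simp: act_mult)
    qed
    obtain l where l: "\<forall>m. T m = sM l m" using schur[OF lin eqv] by blast
    have kill: "act a (x - sM l u) = 0" if "a \<in> ?I" for a
      using Tk[OF that] l by (simp add: act_diff_right act_scale_right)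
    have "x - sM l u \<in> M.span S"
    proof (rule ccontr)
      assume "x - sM l u \<notin> M.span S"
      from insert.IH[OF indS this] kill show False by auto
    qed
    then have "x \<in> M.span (insert u S)" using M.span_breakdown_eq by blast
    with insert.prems(2) show False by blast
  qed
qed

lemma sum_in_set:
  assumes "0 \<in> Q" "\<forall>p\<in>Q. \<forall>q\<in>Q. p + q \<in> Q"
  shows "finite S \<Longrightarrow> (\<forall>s\<in>S. f s \<in> Q) \<Longrightarrow> sum f S \<in> Q"
  by (induction S rule: finite_induct) (use assms in auto)

lemma interp:
  assumes Q0: "0 \<in> Q" and Qadd: "\<forall>p\<in>Q. \<forall>q\<in>Q. p + q \<in> Q" and Qr: "\<forall>q\<in>Q. \<forall>c. q * c \<in> Q"
    and Qfull: "\<forall>v. v \<noteq> 0 \<longrightarrow> (\<forall>z. \<exists>q\<in>Q. act q v = z)"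
    and fin: "finite S" and ind: "M.independent S"
  shows "\<exists>q\<in>Q. \<forall>s\<in>S. act q s = y s"
proof -
  have "\<forall>s\<in>S. \<exists>a. (\<forall>t\<in>S - {s}. act a t = 0) \<and> act a s \<noteq> 0"
  proof
    fix s assume sS: "s \<in> S"
    have "s \<notin> M.span (S - {s})" using ind sS M.dependent_def by blast
    moreover have "M.independent (S - {s})" using ind M.independent_mono by blast
    ultimately show "\<exists>a. (\<forall>t\<in>S - {s}. act a t = 0) \<and> act a s \<noteq> 0"
      using density[of "S - {s}" s] fin by blast
  qed
  then obtain a where a: "\<forall>s\<in>S. (\<forall>t\<in>S - {s}. act (a s) t = 0) \<and> act (a s) s \<noteq> 0" by metis
  have "\<forall>s\<in>S. \<exists>q\<in>Q. act q (act (a s) s) = y s" using a Qfull by blast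
  then obtain q where q: "\<forall>s\<in>S. q s \<in> Q \<and> act (q s) (act (a s) s) = y s" by metis
  let ?b = "\<Sum>s\<in>S. q s * a s"
  have "?b \<in> Q" by (rule sum_in_set[OF Q0 Qadd fin]) (use q Qr in auto)
  moreover have "act ?b t = y t" if tS: "t \<in> S" for t
  proof -
    have "act ?b t = (\<Sum>s\<in>S. act (q s) (act (a s) t))" by (simp add: act_sum_left act_mult)
    also have "\<dots> = act (q t) (act (a t) t) + (\<Sum>s\<in>S - {t}. act (q s) (act (a s) t))"
      using sum.remove[OF fin tS] by blast
    also have "(\<Sum>s\<in>S - {t}. act (q s) (act (a s) t)) = 0"
    proof (rule sum.neutral, rule ballI)
      fix s assume "s \<in> S - {t}"
      then have "act (a s) t = 0" using a tS by blast
      then show "act (q s) (act (a s) t) = 0" by simp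
    qed
    finally show ?thesis using q tS by simp
  qed
  ultimately show ?thesis by blast
qed


lemma aut_facts:
  assumes "algebra_aut sA g"
  shows "bij g" "g 0 = 0" "\<And>x y. g (x + y) = g x + g y" "\<And>x y. g (x * y) = g x * g y"
    "\<And>c x. g (sA c x) = sA c (g x)" "\<And>y. g (inv g y) = y" "\<And>y. inv g (g y) = y"
proof -
  show b: "bij g" using assms unfolding algebra_aut_def by blast
  show ad: "\<And>x y. g (x + y) = g x + g y" using assms unfolding algebra_aut_def by blast
  show "g 0 = 0" using ad[of 0 0] by simp
  show "\<And>x y. g (x * y) = g x * g y" "\<And>c x. g (sA c x) = sA c (g x)"
    using assms unfolding algebra_aut_def by blast+
  show "\<And>y. g (inv g y) = y" using b by (simp add: bij_is_surj surj_f_inv_f)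
  show "\<And>y. inv g (g y) = y" using b by (simp add: bij_is_inj inv_f_f)
qed

lemma Q_full:
  assumes A: "semisimple_algebra sA" and G: "aut_group sA G"
  shows "\<forall>v. v \<noteq> 0 \<longrightarrow> (\<forall>z. \<exists>q. (\<forall>g\<in>G - inertia sM act G. \<forall>m. act (g q) m = 0) \<and> act q v = z)"
proof -
  interpret A: vector_space sA using A unfolding semisimple_algebra_def complex_algebra_def by blast
  obtain v0::'m where v0: "v0 \<noteq> 0" using nontriv by blast
  let ?H = "inertia sM act G"
  let ?L = "{b. act b v0 = 0}"
  have Lid: "left_ideal sA ?L" unfolding left_ideal_def A.subspace_def
    by (auto simp: act_add_left act_scale_left act_mult)
  obtain L' where L': "left_ideal sA L'" "?L \<inter> L' = {0}" "{x + y | x y. x \<in> ?L \<and> y \<in> L'} = UNIV"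
    using A Lid unfolding semisimple_algebra_def by blast
  have L'sub: "A.subspace L'" and L'mul: "\<And>a x. x \<in> L' \<Longrightarrow> a * x \<in> L'"
    using L'(1) unfolding left_ideal_def by auto
  have "1 \<in> {x + y | x y. x \<in> ?L \<and> y \<in> L'}" using L'(3) by simp
  then obtain e e' where ee: "e \<in> ?L" "e' \<in> L'" "1 = e + e'" by blast
  have e'v: "act e' v0 = v0"
  proof -
    have "v0 = act (e + e') v0" using ee(3) by simp
    also have "\<dots> = act e' v0" using ee(1) by (simp add: act_add_left)
    finally show ?thesis by simp
  qed
  have uniq: "b1 = b2" if "b1 \<in> L'" "b2 \<in> L'" "act b1 v0 = act b2 v0" for b1 b2
  proof -
    have "b1 - b2 \<in> L'" using that L'sub A.subspace_diff by blast
    moreover have "b1 - b2 \<in> ?L" using that by (simp add: act_diff_left)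
    ultimately have "b1 - b2 \<in> ?L \<inter> L'" by blast
    then have "b1 - b2 = 0" using L'(2) by blast
    then show ?thesis by simp
  qed
  have surjL: "\<exists>b\<in>L'. act b v0 = m" for m
  proof -
    let ?Y = "(\<lambda>b. act b v0) ` L'"
    have sub: "M.subspace ?Y" unfolding M.subspace_def
    proof (intro conjI ballI allI)
      show "0 \<in> ?Y" by (rule image_eqI[of _ _ 0]) (use L'sub A.subspace_0 in auto)
    next
      fix p q assume "p \<in> ?Y" "q \<in> ?Y"
      then obtain a b where "a \<in> L'" "b \<in> L'" "p = act a v0" "q = act b v0" by auto
      then show "p + q \<in> ?Y" by (intro image_eqI[of _ _ "a + b"]) (auto simp: act_add_left L'sub A.subspace_add)
    next
      fix c p assume "p \<in> ?Y"
      then obtain a where "a \<in> L'" "p = act a v0" by auto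
      then show "sM c p \<in> ?Y" by (intro image_eqI[of _ _ "sA c a"]) (auto simp: act_scale_left L'sub A.subspace_scale)
    qed
    have st: "\<forall>c. \<forall>m\<in>?Y. act c m \<in> ?Y"
    proof (intro allI ballI)
      fix c m assume "m \<in> ?Y"
      then obtain a where "a \<in> L'" "m = act a v0" by auto
      then show "act c m \<in> ?Y" by (intro image_eqI[of _ _ "c * a"]) (auto simp: act_mult L'mul)
    qed
    have "v0 \<in> ?Y" using e'v ee(2) by force
    then have "?Y \<noteq> {0}" using v0 by auto
    with simple[OF sub st] have "?Y = UNIV" by blast
    then show ?thesis by (metis UNIV_I imageE)
  qed
  define \<psi> where "\<psi> m = (THE b. b \<in> L' \<and> act b v0 = m)" for m
  have \<psi>: "\<psi> m \<in> L' \<and> act (\<psi> m) v0 = m" for m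
  proof -
    have "\<exists>!b. b \<in> L' \<and> act b v0 = m" using surjL uniq by blast
    then show ?thesis unfolding \<psi>_def by (rule theI')
  qed
  have \<psi>b: "\<psi> (act b v0) = b" if "b \<in> L'" for b
    using uniq[OF \<psi>[THEN conjunct1] that] \<psi> by blast
  have \<psi>add: "\<psi> (m1 + m2) = \<psi> m1 + \<psi> m2" for m1 m2
  proof -
    have "\<psi> m1 + \<psi> m2 \<in> L'" using \<psi> L'sub A.subspace_add by blast
    then have "\<psi> (act (\<psi> m1 + \<psi> m2) v0) = \<psi> m1 + \<psi> m2" by (rule \<psi>b)
    then show ?thesis using \<psi> by (simp add: act_add_left)
  qed
  have \<psi>sc: "\<psi> (sM c m) = sA c (\<psi> m)" for c m
  proof -
    have "sA c (\<psi> m) \<in> L'" using \<psi> L'sub A.subspace_scale by blast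
    then have "\<psi> (act (sA c (\<psi> m)) v0) = sA c (\<psi> m)" by (rule \<psi>b)
    then show ?thesis using \<psi> by (simp add: act_scale_left)
  qed
  have \<psi>mul: "\<psi> (act c m) = c * \<psi> m" for c m
  proof -
    have "c * \<psi> m \<in> L'" using \<psi> L'mul by blast
    then have "\<psi> (act (c * \<psi> m) v0) = c * \<psi> m" by (rule \<psi>b)
    then show ?thesis using \<psi> by (simp add: act_mult)
  qed
  have kill: "act (g b) x = 0" if g: "g \<in> G - ?H" and b: "b \<in> L'" for g b x
  proof (rule ccontr)
    assume nz: "act (g b) x \<noteq> 0"
    have ga: "algebra_aut sA g" using G g unfolding aut_group_def by blast
    note gf = aut_facts[OF ga]
    define F where "F m = act (g (\<psi> m)) x" for m
    have Fadd: "F (m1 + m2) = F m1 + F m2" for m1 m2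
      unfolding F_def by (simp add: \<psi>add gf act_add_left)
    have Fsc: "F (sM c m) = sM c (F m)" for c m
      unfolding F_def by (simp add: \<psi>sc gf act_scale_left)
    have Flin: "Vector_Spaces.linear sM sM F"
      unfolding Vector_Spaces.linear_iff using vsM Fadd Fsc by blast
    have Feq: "F (act c m) = act (g c) (F m)" for c m
      unfolding F_def by (simp add: \<psi>mul gf act_mult)
    have Fb: "F (act b v0) = act (g b) x" unfolding F_def using \<psi>b[OF b] by simp
    have F0: "F 0 = 0" using Fadd[of 0 0] by simp
    let ?K = "{m. F m = 0}"
    have subK: "M.subspace ?K" unfolding M.subspace_def by (auto simp: Fadd Fsc F0)
    have stK: "\<forall>c. \<forall>m\<in>?K. act c m \<in> ?K" by (auto simp: Feq)
    have "?K \<noteq> UNIV"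
    proof
      assume "?K = UNIV"
      then have "F (act b v0) = 0" by blast
      with Fb nz show False by simp
    qed
    then have K0: "?K = {0}" using simple[OF subK stK] by blast
    have injF: "inj F"
    proof (rule injI)
      fix m1 m2 assume "F m1 = F m2"
      then have "F (m1 - m2) = 0" using Fadd[of "m1 - m2" m2] by simp
      then have "m1 - m2 \<in> ?K" by simp
      then have "m1 - m2 = 0" using K0 by blast
      then show "m1 = m2" by simp
    qed
    let ?R = "range F"
    have subR: "M.subspace ?R" unfolding M.subspace_def
    proof (intro conjI ballI allI)
      show "0 \<in> ?R" using F0[symmetric] by blast
    next
      fix p q assume "p \<in> ?R" "q \<in> ?R"
      then obtain p' q' where "p = F p'" "q = F q'" by blast
      then show "p + q \<in> ?R" using Fadd[of p' q'] by (metis rangeI)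
    next
      fix c p assume "p \<in> ?R"
      then obtain p' where "p = F p'" by blast
      then show "sM c p \<in> ?R" using Fsc[of c p'] by (metis rangeI)
    qed
    have stR: "\<forall>c. \<forall>m\<in>?R. act c m \<in> ?R"
    proof (intro allI ballI)
      fix c m assume "m \<in> ?R"
      then obtain m' where "m = F m'" by auto
      then have "act c m = F (act (inv g c) m')" using Feq gf by simp
      then show "act c m \<in> ?R" by simp
    qed
    have "?R \<noteq> {0}" using Fb nz by (metis rangeI singletonD)
    then have "?R = UNIV" using simple[OF subR stR] by blast
    then have "bij F" using injF by (simp add: bij_def)
    moreover have "\<forall>a m. F (act (inv g a) m) = act a (F m)" using Feq gf by simp
    ultimately have "g \<in> ?H" using g Flin unfolding inertia_def by blast
    with g show False by blast
  qed
  let ?Q = "{q. \<forall>g\<in>G - ?H. \<forall>m. act (g q) m = 0}"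
  have gf: "algebra_aut sA g" if "g \<in> G" for g using G that unfolding aut_group_def by blast
  have Qleft: "c * q \<in> ?Q" if "q \<in> ?Q" for c q
  proof (intro CollectI ballI allI)
    fix g m assume g: "g \<in> G - ?H"
    then have "act (g q) m = 0" using that by blast
    then show "act (g (c * q)) m = 0" using aut_facts(4)[OF gf[of g]] g by (simp add: act_mult)
  qed
  have Qright: "q * c \<in> ?Q" if "q \<in> ?Q" for c q
  proof (intro CollectI ballI allI)
    fix g m assume g: "g \<in> G - ?H"
    then have "act (g q) (act (g c) m) = 0" using that by blast
    then show "act (g (q * c)) m = 0" using aut_facts(4)[OF gf[of g]] g by (simp add: act_mult)
  qed
  have Qadd: "p + q \<in> ?Q" if "p \<in> ?Q" "q \<in> ?Q" for p q
  proof (intro CollectI ballI allI)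
    fix g m assume g: "g \<in> G - ?H"
    then have "act (g q) m = 0" "act (g p) m = 0" using that by blast+
    then show "act (g (p + q)) m = 0" using aut_facts(3)[OF gf[of g]] g by (simp add: act_add_left)
  qed
  have Q0: "0 \<in> ?Q" using aut_facts(2)[OF gf] by (auto simp del: act_zero_left) (metis act_zero_left)
  have Qsc: "sA c q \<in> ?Q" if "q \<in> ?Q" for c q
  proof (intro CollectI ballI allI)
    fix g m assume g: "g \<in> G - ?H"
    then have "act (g q) m = 0" using that by blast
    then show "act (g (sA c q)) m = 0" using aut_facts(5)[OF gf[of g]] g by (simp add: act_scale_left)
  qed
  have e'Q: "e' \<in> ?Q" using kill ee(2) by blast
  let ?Z = "{x. \<forall>q\<in>?Q. act q x = 0}"
  have subZ: "M.subspace ?Z" unfolding M.subspace_def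
    by (auto simp: act_add_right act_scale_right)
  have stZ: "\<forall>c. \<forall>m\<in>?Z. act c m \<in> ?Z"
  proof (intro allI ballI CollectI)
    fix c m q assume "m \<in> ?Z" "q \<in> ?Q"
    then show "act q (act c m) = 0" using Qright[of q c] by (simp add: act_mult[symmetric])
  qed
  have "v0 \<notin> ?Z" using e'Q e'v v0 by force
  then have Z0: "?Z = {0}" using simple[OF subZ stZ] by blast
  show ?thesis
  proof (intro allI impI)
    fix v z :: 'm assume v: "v \<noteq> 0"
    then have "v \<notin> ?Z" using Z0 by blast
    then obtain q0 where q0: "q0 \<in> ?Q" "act q0 v \<noteq> 0" by blast
    let ?Y = "(\<lambda>q. act q v) ` ?Q"
    have sub: "M.subspace ?Y" unfolding M.subspace_def
    proof (intro conjI ballI allI)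
      show "0 \<in> ?Y" by (rule image_eqI[of _ _ 0]) (use Q0 in auto)
    next
      fix p q assume "p \<in> ?Y" "q \<in> ?Y"
      then obtain a b where "a \<in> ?Q" "b \<in> ?Q" "p = act a v" "q = act b v" by blast
      then show "p + q \<in> ?Y" using Qadd by (intro image_eqI[of _ _ "a + b"]) (auto simp: act_add_left)
    next
      fix c p assume "p \<in> ?Y"
      then obtain a where "a \<in> ?Q" "p = act a v" by blast
      then show "sM c p \<in> ?Y" using Qsc by (intro image_eqI[of _ _ "sA c a"]) (auto simp: act_scale_left)
    qed
    have st: "\<forall>c. \<forall>m\<in>?Y. act c m \<in> ?Y"
    proof (intro allI ballI)
      fix c m assume "m \<in> ?Y"
      then obtain a where "a \<in> ?Q" "m = act a v" by blast
      then show "act c m \<in> ?Y" using Qleft by (intro image_eqI[of _ _ "c * a"]) (auto simp: act_mult)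
    qed
    have "?Y \<noteq> {0}" using q0 by blast
    then have "?Y = UNIV" using simple[OF sub st] by blast
    then have "z \<in> ?Y" by simp
    then show "\<exists>q. (\<forall>g\<in>G - ?H. \<forall>m. act (g q) m = 0) \<and> act q v = z" by blast
  qed
qed

end


theorem theorem3p5:
  fixes sA :: "complex \<Rightarrow> 'a::ring_1 \<Rightarrow> 'a"
    and G :: "('a \<Rightarrow> 'a) set"
    and sM :: "complex \<Rightarrow> 'm::ab_group_add \<Rightarrow> 'm"
    and act :: "'a \<Rightarrow> 'm \<Rightarrow> 'm"
    and \<phi> :: "('a \<Rightarrow> 'a) \<Rightarrow> 'm \<Rightarrow> 'm"
    and \<alpha> :: "('a \<Rightarrow> 'a) \<Rightarrow> ('a \<Rightarrow> 'a) \<Rightarrow> complex"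
    and sW :: "complex \<Rightarrow> 'w::ab_group_add \<Rightarrow> 'w"
    and \<rho> :: "('a \<Rightarrow> 'a) \<Rightarrow> 'w \<Rightarrow> 'w"
    and w :: 'w
  assumes A: "semisimple_algebra sA"
    and G: "aut_group sA G"
    and M_mod: "A_module sA sM act"
    and M_fd: "fin_dim sM"
    and M_simple: "simple_over sM act UNIV UNIV"
    and phi_iso: "\<forall>h\<in>inertia sM act G. Vector_Spaces.linear sM sM (\<phi> h) \<and> bij (\<phi> h) \<and>
                    (\<forall>a m. \<phi> h (act a m) = act (h a) (\<phi> h m))"
    and phi_one: "\<phi> id = id"
    and cocycle: "\<forall>h\<in>inertia sM act G. \<forall>k\<in>inertia sM act G. \<forall>m.
                    \<phi> h (\<phi> k m) = sM (\<alpha> h k) (\<phi> (h \<circ> k) m)"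
    and W_simple: "simple_twisted_module sW \<rho> (inertia sM act G) \<alpha>"
    and W_occurs: "\<exists>f. twisted_hom sW sM \<rho> \<phi> (inertia sM act G) f \<and> inj f"
    and w_nz: "w \<noteq> 0"
  shows "simple_over sM act (fixed_alg G) (mult_space sW sM \<rho> \<phi> (inertia sM act G) w)"
proof -
  interpret smod sA sM act using M_mod M_fd M_simple by unfold_locales
  let ?H = "inertia sM act G"
  have Gfin: "finite G" and idG: "id \<in> G" and Gaut: "\<And>g. g \<in> G \<Longrightarrow> algebra_aut sA g"
    and Gcomp: "\<And>g h. g \<in> G \<Longrightarrow> h \<in> G \<Longrightarrow> g \<circ> h \<in> G" and Ginv: "\<And>g. g \<in> G \<Longrightarrow> inv g \<in> G"
    using G unfolding aut_group_def by auto
  have HG: "?H \<subseteq> G" unfolding inertia_def by blast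
  have Hfin: "finite ?H" using HG Gfin finite_subset by blast
  have idH: "id \<in> ?H" unfolding inertia_def using idG M.linear_id by auto
  have Hinv: "inv h \<in> ?H" if h: "h \<in> ?H" for h
  proof -
    obtain f where f: "Vector_Spaces.linear sM sM f" "bij f" "\<forall>a m. f (act (inv h a) m) = act a (f m)"
      using h unfolding inertia_def by blast
    have hG: "h \<in> G" using h HG by blast
    note hf = aut_facts[OF Gaut[OF hG]]
    have lin: "Vector_Spaces.linear sM sM (inv f)"
    proof -
      have fa: "f (x + y) = f x + f y" "f (sM c x) = sM c (f x)" for x y c
        using f(1) unfolding Vector_Spaces.linear_iff by blast+
      have si: "f (inv f y) = y" for y using f(2) by (simp add: bij_is_surj surj_f_inv_f)
      have ii: "inv f (f y) = y" for y using f(2) by (simp add: bij_is_inj inv_f_f)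
      have "inv f (x + y) = inv f x + inv f y" for x y
        by (metis fa(1) si ii)
      moreover have "inv f (sM c x) = sM c (inv f x)" for c x
        by (metis fa(2) si ii)
      ultimately show ?thesis unfolding Vector_Spaces.linear_iff using vsM by blast
    qed
    have "inv f (act (inv (inv h) a) m) = act a (inv f m)" for a m
    proof -
      have "f (act (inv h (h a)) (inv f m)) = act (h a) (f (inv f m))" using f(3) by blast
      then have "f (act a (inv f m)) = act (h a) m"
        using hf f(2) by (simp add: bij_is_surj surj_f_inv_f)
      then have "act a (inv f m) = inv f (act (h a) m)"
        using f(2) by (metis bij_is_inj inv_f_f)
      then show ?thesis using hf(1) by (simp add: inv_inv_eq)
    qed
    then show ?thesis unfolding inertia_def using Ginv[OF hG] lin f(2) bij_imp_bij_inv by blast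
  qed
  have phiL: "Vector_Spaces.linear sM sM (\<phi> h)" and phiB: "bij (\<phi> h)"
    and phiE: "\<And>a m. \<phi> h (act a m) = act (h a) (\<phi> h m)" if "h \<in> ?H" for h
    using phi_iso that by blast+
  have TW: "twisted_module sW \<rho> ?H \<alpha>" and fdW: "fin_dim sW"
    and Wsimp: "\<And>N. module.subspace sW N \<Longrightarrow> (\<forall>h\<in>?H. \<forall>w\<in>N. \<rho> h w \<in> N) \<Longrightarrow> N = {0} \<or> N = UNIV"
    using W_simple unfolding simple_twisted_module_def by blast+
  have vsW: "vector_space sW" and rhoL: "\<And>h. h \<in> ?H \<Longrightarrow> Vector_Spaces.linear sW sW (\<rho> h)"
    and rho_id: "\<rho> id = id" and rhoC: "\<And>h k x. h \<in> ?H \<Longrightarrow> k \<in> ?H \<Longrightarrow> \<rho> h (\<rho> k x) = sW (\<alpha> h k) (\<rho> (h \<circ> k) x)"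
    using TW unfolding twisted_module_def by blast+
  interpret W: vector_space sW by (rule vsW)
  have thL: "Vector_Spaces.linear sW sM f" and thE: "\<And>h x. h \<in> ?H \<Longrightarrow> f (\<rho> h x) = \<phi> h (f x)"
    if "twisted_hom sW sM \<rho> \<phi> ?H f" for f
    using that unfolding twisted_hom_def by blast+
  have lin_add: "f (x + y) = f x + f y" and lin_sc: "f (sW c x) = sM c (f x)"
    if "Vector_Spaces.linear sW sM f" for f x y c
    using that unfolding Vector_Spaces.linear_iff by blast+
  have lin0: "f 0 = 0" if "Vector_Spaces.linear sW sM f" for f
    using lin_add[OF that, of 0 0] by simp
  have phi_add: "\<phi> h (x + y) = \<phi> h x + \<phi> h y" and phi_sc: "\<phi> h (sM c x) = sM c (\<phi> h x)"
    if "h \<in> ?H" for h x y c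
    using phiL[OF that] unfolding Vector_Spaces.linear_iff by blast+
  have rho_add: "\<rho> h (x + y) = \<rho> h x + \<rho> h y" and rho_sc: "\<rho> h (sW c x) = sW c (\<rho> h x)"
    if "h \<in> ?H" for h x y c
    using rhoL[OF that] unfolding Vector_Spaces.linear_iff by blast+
  have phi0: "\<phi> h 0 = 0" if "h \<in> ?H" for h using phi_add[OF that, of 0 0] by simp
  have hom_inj: "inj f" if hf: "twisted_hom sW sM \<rho> \<phi> ?H f" and nz: "f w \<noteq> 0" for f
  proof -
    let ?K = "{x. f x = 0}"
    have sub: "W.subspace ?K" unfolding W.subspace_def
      using lin_add[OF thL[OF hf]] lin_sc[OF thL[OF hf]] lin0[OF thL[OF hf]] by auto
    have st: "\<forall>h\<in>?H. \<forall>x\<in>?K. \<rho> h x \<in> ?K"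
    proof (intro ballI)
      fix h x assume "h \<in> ?H" "x \<in> ?K"
      then show "\<rho> h x \<in> ?K" using thE[OF hf] phi0 by simp
    qed
    have "?K \<noteq> UNIV" using nz by blast
    then have K0: "?K = {0}" using Wsimp[OF sub st] by blast
    show ?thesis
    proof (rule injI)
      fix x y assume "f x = f y"
      then have "f (x - y) = 0" using lin_add[OF thL[OF hf], of "x - y" y] by simp
      then have "x - y = 0" using K0 by blast
      then show "x = y" by simp
    qed
  qed
  have rho_surj: "\<exists>v. \<rho> h v = w" if h: "h \<in> ?H" for h
  proof -
    have hG: "h \<in> G" using h HG by blast
    note hf = aut_facts[OF Gaut[OF hG]]
    have hinv: "h \<circ> inv h = id" using hf(1) bij_is_surj surj_iff by blast
    have ih: "inv h \<in> ?H" by (rule Hinv[OF h])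
    have anz: "\<alpha> h (inv h) \<noteq> 0"
    proof
      assume a0: "\<alpha> h (inv h) = 0"
      obtain v :: 'm where v: "v \<noteq> 0" using nontriv by blast
      obtain u where u: "\<phi> h u = v" using phiB[OF h] by (metis bij_pointE)
      obtain m where m: "\<phi> (inv h) m = u" using phiB[OF ih] by (metis bij_pointE)
      have "\<phi> h (\<phi> (inv h) m) = sM (\<alpha> h (inv h)) (\<phi> (h \<circ> inv h) m)" using cocycle h ih by blast
      then have "v = 0" using a0 u m by simp
      with v show False by simp
    qed
    let ?v = "\<rho> (inv h) (sW (inverse (\<alpha> h (inv h))) w)"
    have "\<rho> h ?v = sW (\<alpha> h (inv h)) (\<rho> id (sW (inverse (\<alpha> h (inv h))) w))"
      using rhoC[OF h ih] hinv by simp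
    also have "\<dots> = w" using anz rho_id by simp
    finally show ?thesis by blast
  qed
  let ?MG = "mult_space sW sM \<rho> \<phi> ?H w"
  have th_zero: "twisted_hom sW sM \<rho> \<phi> ?H (\<lambda>x. 0)"
    unfolding twisted_hom_def using vsW vsM phiL
    by (auto simp: Vector_Spaces.linear_iff phi0)
  have th_add: "twisted_hom sW sM \<rho> \<phi> ?H (\<lambda>x. f1 x + f2 x)"
    if "twisted_hom sW sM \<rho> \<phi> ?H f1" "twisted_hom sW sM \<rho> \<phi> ?H f2" for f1 f2
    unfolding twisted_hom_def Vector_Spaces.linear_iff
    using vsW vsM lin_add[OF thL[OF that(1)]] lin_add[OF thL[OF that(2)]]
      lin_sc[OF thL[OF that(1)]] lin_sc[OF thL[OF that(2)]] thE[OF that(1)] thE[OF that(2)] phi_add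
    by (simp add: M.scale_right_distrib)
  have th_sc: "twisted_hom sW sM \<rho> \<phi> ?H (\<lambda>x. sM c (f x))"
    if "twisted_hom sW sM \<rho> \<phi> ?H f" for f c
    unfolding twisted_hom_def Vector_Spaces.linear_iff
    using vsW vsM lin_add[OF thL[OF that]] lin_sc[OF thL[OF that]] thE[OF that] phi_sc
    by (simp add: M.scale_right_distrib M.scale_left_commute)
  have th_act: "twisted_hom sW sM \<rho> \<phi> ?H (\<lambda>x. act a (f x))"
    if "twisted_hom sW sM \<rho> \<phi> ?H f" "a \<in> fixed_alg G" for f a
  proof -
    have fix': "h a = a" if "h \<in> ?H" for h using that HG \<open>a \<in> fixed_alg G\<close> unfolding fixed_alg_def by blast
    show ?thesis
      unfolding twisted_hom_def Vector_Spaces.linear_iff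
    proof (intro conjI allI ballI vsW vsM)
      fix x y show "act a (f (x + y)) = act a (f x) + act a (f y)"
        using lin_add[OF thL[OF that(1)]] by (simp add: act_add_right)
    next
      fix c x show "act a (f (sW c x)) = sM c (act a (f x))"
        using lin_sc[OF thL[OF that(1)]] by (simp add: act_scale_right)
    next
      fix h x assume h: "h \<in> ?H"
      have "act a (f (\<rho> h x)) = act a (\<phi> h (f x))" using thE[OF that(1) h] by simp
      also have "\<phi> h (act a (f x)) = act (h a) (\<phi> h (f x))" using phiE[OF h] by blast
      then have "\<phi> h (act a (f x)) = act a (\<phi> h (f x))" using fix'[OF h] by simp
      finally show "act a (f (\<rho> h x)) = \<phi> h (act a (f x))" by simp
    qed
  qed
  have sub: "M.subspace ?MG" unfolding M.subspace_def mult_space_def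
  proof (intro conjI ballI allI)
    show "0 \<in> {f w |f. twisted_hom sW sM \<rho> \<phi> ?H f}" using th_zero by force
  next
    fix x y assume "x \<in> {f w |f. twisted_hom sW sM \<rho> \<phi> ?H f}" "y \<in> {f w |f. twisted_hom sW sM \<rho> \<phi> ?H f}"
    then obtain f1 f2 where "twisted_hom sW sM \<rho> \<phi> ?H f1" "twisted_hom sW sM \<rho> \<phi> ?H f2" "x = f1 w" "y = f2 w"
      by blast
    then show "x + y \<in> {f w |f. twisted_hom sW sM \<rho> \<phi> ?H f}" using th_add by force
  next
    fix c x assume "x \<in> {f w |f. twisted_hom sW sM \<rho> \<phi> ?H f}"
    then obtain f where "twisted_hom sW sM \<rho> \<phi> ?H f" "x = f w" by blast
    then show "sM c x \<in> {f w |f. twisted_hom sW sM \<rho> \<phi> ?H f}" using th_sc by force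
  qed
  have st: "\<forall>a\<in>fixed_alg G. \<forall>m\<in>?MG. act a m \<in> ?MG"
  proof (intro ballI)
    fix a m assume a: "a \<in> fixed_alg G" and "m \<in> ?MG"
    then obtain f where "twisted_hom sW sM \<rho> \<phi> ?H f" "m = f w" unfolding mult_space_def by blast
    then show "act a m \<in> ?MG" unfolding mult_space_def using th_act[OF _ a] by force
  qed
  have nz: "?MG \<noteq> {0}"
  proof -
    obtain f where f: "twisted_hom sW sM \<rho> \<phi> ?H f" "inj f" using W_occurs by blast
    have "f w \<noteq> 0" using f(2) lin0[OF thL[OF f(1)]] w_nz by (metis injD)
    moreover have "f w \<in> ?MG" unfolding mult_space_def using f(1) by blast
    ultimately show ?thesis by blast
  qed
  let ?Q = "{q. \<forall>g\<in>G - ?H. \<forall>m. act (g q) m = 0}"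
  have gf: "algebra_aut sA g" if "g \<in> G" for g using Gaut that by blast
  have Qright: "\<forall>q\<in>?Q. \<forall>c. q * c \<in> ?Q"
  proof (intro ballI allI CollectI)
    fix q c g m assume q: "q \<in> ?Q" and g: "g \<in> G - ?H"
    then have "act (g q) (act (g c) m) = 0" by blast
    then show "act (g (q * c)) m = 0" using aut_facts(4)[OF gf[of g]] g by (simp add: act_mult)
  qed
  have Qadd: "\<forall>p\<in>?Q. \<forall>q\<in>?Q. p + q \<in> ?Q"
  proof (intro ballI allI CollectI)
    fix p q g m assume "p \<in> ?Q" "q \<in> ?Q" and g: "g \<in> G - ?H"
    then have "act (g q) m = 0" "act (g p) m = 0" by blast+
    then show "act (g (p + q)) m = 0" using aut_facts(3)[OF gf[of g]] g by (simp add: act_add_left)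
  qed
  have Q0: "0 \<in> ?Q" using aut_facts(2)[OF gf] by (auto simp del: act_zero_left) (metis act_zero_left)
  have Qfull: "\<forall>v. v \<noteq> 0 \<longrightarrow> (\<forall>z. \<exists>q\<in>?Q. act q v = z)"
    using Q_full[OF A G] by blast
  have simp_part: "N = ?MG \<or> N = {0}"
    if N: "N \<subseteq> ?MG" "M.subspace N" "\<forall>a\<in>fixed_alg G. \<forall>m\<in>N. act a m \<in> N" for N
  proof (rule disjCI)
    assume "N \<noteq> {0}"
    then obtain n0 where n0: "n0 \<in> N" "n0 \<noteq> 0" using N(2) M.subspace_0 by blast
    then obtain f0 where f0: "twisted_hom sW sM \<rho> \<phi> ?H f0" "n0 = f0 w"
      using N(1) unfolding mult_space_def by blast
    have inj0: "inj f0" using hom_inj[OF f0(1)] f0(2) n0(2) by simp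
    have L0: "Vector_Spaces.linear sW sM f0" by (rule thL[OF f0(1)])
    show "N = ?MG"
    proof
      show "?MG \<subseteq> N"
      proof
        fix m assume "m \<in> ?MG"
        then obtain f' where f': "twisted_hom sW sM \<rho> \<phi> ?H f'" "m = f' w"
          unfolding mult_space_def by blast
        have L': "Vector_Spaces.linear sW sM f'" by (rule thL[OF f'(1)])
        obtain B0 where B0: "finite B0" "W.span B0 = UNIV" using fdW unfolding fin_dim_def by blast
        obtain B where B: "B \<subseteq> B0" "W.independent B" "B0 \<subseteq> W.span B"
          using W.maximal_independent_subset[of B0] by blast
        have finB: "finite B" using B(1) B0(1) finite_subset by blast
        have spB: "W.span B = UNIV" using B(3) B0(2) W.span_mono W.span_span by blast
        interpret F0: Vector_Spaces.linear sW sM f0 by (rule L0)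
        have indS: "M.independent (f0 ` B)" using F0.independent_inj_image[OF B(2) inj0] .
        obtain b where b: "b \<in> ?Q" "\<forall>s\<in>f0 ` B. act b s = f' (inv f0 s)"
          using interp[OF Q0 Qadd Qright Qfull finite_imageI[OF finB] indS, of "\<lambda>s. f' (inv f0 s)"] by blast
        have bB: "act b (f0 x) = f' x" if "x \<in> B" for x
          using b(2) that inj0 by (simp add: inv_f_f)
        have Lb: "Vector_Spaces.linear sW sM (act b \<circ> f0)"
          by (rule Vector_Spaces.linear_compose[OF L0 act_lin])
        have vsp: "vector_space_pair sW sM" unfolding vector_space_pair_def using vsW vsM by blast
        have bAll: "act b (f0 x) = f' x" for x
          using vector_space_pair.linear_eq_on[OF vsp Lb L', of x B] spB bB by simp
        have hterm: "act (h b) n0 = f' w" if h: "h \<in> ?H" for h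
        proof -
          obtain v where v: "\<rho> h v = w" using rho_surj[OF h] by blast
          have "\<phi> h (f0 v) = n0" using f0(2) thE[OF f0(1) h, of v] v by simp
          then have "act (h b) n0 = act (h b) (\<phi> h (f0 v))" by simp
          also have "\<dots> = \<phi> h (act b (f0 v))" using phiE[OF h] by simp
          also have "\<dots> = \<phi> h (f' v)" using bAll by simp
          also have "\<dots> = f' w" using thE[OF f'(1) h, of v] v by simp
          finally show ?thesis .
        qed
        have gterm: "act (g b) n0 = 0" if "g \<in> G - ?H" for g using b(1) that by blast
        define a where "a = sA (inverse (of_nat (card ?H))) (\<Sum>g\<in>G. g b)"
        have cH: "card ?H \<noteq> 0" using Hfin idH by auto
        have "act (\<Sum>g\<in>G. g b) n0 = (\<Sum>g\<in>G. act (g b) n0)" by (rule act_sum_left)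
        also have "\<dots> = (\<Sum>g\<in>G - ?H. act (g b) n0) + (\<Sum>g\<in>?H. act (g b) n0)"
          by (rule sum.subset_diff[OF HG Gfin])
        also have "\<dots> = (\<Sum>g\<in>?H. f' w)" using gterm hterm by simp
        also have "\<dots> = sM (of_nat (card ?H)) (f' w)" by (rule M.sum_constant_scale)
        finally have an0: "act a n0 = f' w" unfolding a_def using cH by (simp add: act_scale_left)
        have aG: "a \<in> fixed_alg G" unfolding fixed_alg_def
        proof (intro CollectI ballI)
          fix k assume k: "k \<in> G"
          note kf = aut_facts[OF Gaut[OF k]]
          have imgG: "(\<lambda>g. k \<circ> g) ` G = G"
          proof
            show "(\<lambda>g. k \<circ> g) ` G \<subseteq> G" using Gcomp k by blast
          next
            show "G \<subseteq> (\<lambda>g. k \<circ> g) ` G"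
            proof
              fix g assume g: "g \<in> G"
              have "k \<circ> inv k = id" using kf(1) bij_is_surj surj_iff by blast
              then have "g = k \<circ> (inv k \<circ> g)" by (simp add: o_assoc)
              moreover have "inv k \<circ> g \<in> G" using Gcomp Ginv k g by blast
              ultimately show "g \<in> (\<lambda>g. k \<circ> g) ` G" by blast
            qed
          qed
          have "k (\<Sum>g\<in>G. g b) = (\<Sum>g\<in>G. k (g b))"
            using sum_comp_morphism[of k "\<lambda>g. g b" G] kf(2,3) by (simp add: comp_def)
          also have "\<dots> = (\<Sum>g\<in>(\<lambda>g. k \<circ> g) ` G. g b)"
          proof -
            have "inj_on (\<lambda>g. k \<circ> g) G"
            proof (rule inj_onI)
              fix g1 g2 assume "k \<circ> g1 = k \<circ> g2"
              then have "k (g1 x) = k (g2 x)" for x by (metis comp_apply)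
              then have "inv k (k (g1 x)) = inv k (k (g2 x))" for x by simp
              then show "g1 = g2" using kf(7) by (simp add: fun_eq_iff)
            qed
            then show ?thesis by (simp add: sum.reindex)
          qed
          also have "\<dots> = (\<Sum>g\<in>G. g b)" using imgG by simp
          finally show "k a = a" unfolding a_def using kf(5) by simp
        qed
        have "act a n0 \<in> N" using N(3) aG n0(1) by blast
        then show "m \<in> N" using an0 f'(2) by simp
      qed
    next
      show "N \<subseteq> ?MG" by (rule N(1))
    qed
  qed
  show ?thesis unfolding simple_over_def
    using sub st nz simp_part by blast
qed

end
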